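(* Let $\mathfrak{g}_1,\mathfrak{g}_2$ be real solvable Lie algebras with $m_i=b_1(\mathfrak{g}_i)$. If $\mathcal{N}(\mathfrak{g}_1)=\mathcal{N}(\mathfrak{g}_2)=0$, then $\mathcal{N}(\mathfrak{g}_1\underline{\times}\mathfrak{g}_2)=m_1m_2$.
   Context: All Lie algebras are finite-dimensional over $\mathbb{R}$; $b_1(\mathfrak{g})=\dim\mathfrak{g}/[\mathfrak{g},\mathfrak{g}]$. $\mathcal{N}(\mathfrak{g})$ denotes the number of functionally independent invariants of the coadjoint representation: $\mathcal{N}(\mathfrak{g})=\dim\mathfrak{g}-\max_x\operatorname{rank}\big(\sum_k C_{ij}^kx_k\big)_{i,j}$, where $C_{ij}^k$ are the structure constants in a basis. Product by generators: choose linear forms $\omega_1,\dots,\omega_{m_1}$ on $\mathfrak{g}_1$ vanishing on $[\mathfrak{g}_1,\mathfrak{g}_1]$ and inducing a basis of $(\mathfrak{g}_1/[\mathfrak{g}_1,\mathfrak{g}_1])^*$, similarly $\omega'_1,\dots,\omega'_{m_2}$ for $\mathfrak{g}_2$; $\mathfrak{g}_1\underline{\times}\mathfrak{g}_2$ is the Lie algebra on $\mathfrak{g}_1\oplus\mathfrak{g}_2\oplus\mathbb{R}^{m_1m_2}$ (basis $Z_{ij}$ of the last summand) whose bracket restricts to the given brackets on $\mathfrak{g}_1$ and $\mathfrak{g}_2$, with $Z_{ij}$ central and $[x,y]=\sum_{i,j}\omega_i(x)\omega'_j(y)Z_{ij}$ for $x\in\mathfrak{g}_1$, $y\in\mathfrak{g}_2$.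 *)

theory Defs
  imports "HOL-Analysis.Analysis"
begin

text \<open>A finite-dimensional real Lie algebra of dimension CARD('n) is modelled as a
  bracket on real^'n (coordinates w.r.t. the standard basis axis i 1).\<close>

definition lie_algebra :: "(real^'n \<Rightarrow> real^'n \<Rightarrow> real^'n) \<Rightarrow> bool" where
  "lie_algebra br \<longleftrightarrow> bilinear br \<and> (\<forall>x. br x x = 0) \<and>
     (\<forall>x y z. br x (br y z) + br y (br z x) + br z (br x y) = 0)"

definition derived_set :: "(real^'n \<Rightarrow> real^'n \<Rightarrow> real^'n) \<Rightarrow> (real^'n) set \<Rightarrow> (real^'n) set" where
  "derived_set br S = span {br x y | x y. x \<in> S \<and> y \<in> S}"

definition derived_series :: "(real^'n \<Rightarrow> real^'n \<Rightarrow> real^'n) \<Rightarrow> nat \<Rightarrow> (real^'n) set" where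
  "derived_series br k = (derived_set br ^^ k) UNIV"

definition solvable_lie :: "(real^'n \<Rightarrow> real^'n \<Rightarrow> real^'n) \<Rightarrow> bool" where
  "solvable_lie br \<longleftrightarrow> (\<exists>k. derived_series br k = {0})"

definition betti1 :: "(real^'n \<Rightarrow> real^'n \<Rightarrow> real^'n) \<Rightarrow> nat" where
  "betti1 br = CARD('n) - dim (derived_set br UNIV)"

definition structure_const :: "(real^'n \<Rightarrow> real^'n \<Rightarrow> real^'n) \<Rightarrow> 'n \<Rightarrow> 'n \<Rightarrow> 'n \<Rightarrow> real" where
  "structure_const br i j k = br (axis i 1) (axis j 1) $ k"

definition coadj_matrix :: "(real^'n \<Rightarrow> real^'n \<Rightarrow> real^'n) \<Rightarrow> real^'n \<Rightarrow> real^'n^'n" where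
  "coadj_matrix br x = (\<chi> i j. \<Sum>k\<in>UNIV. structure_const br i j k * x $ k)"

text \<open>Number of functionally independent invariants of the coadjoint representation.\<close>
definition num_invariants :: "(real^'n \<Rightarrow> real^'n \<Rightarrow> real^'n) \<Rightarrow> nat" where
  "num_invariants br = CARD('n) - Max (range (\<lambda>x. rank (coadj_matrix br x)))"

text \<open>The underlying space is g1 + g2 + R^(m1 m2), coordinates
  indexed by 'n1 + ('n2 + ('i \<times> 'j)). The linear forms omega_i, omega'_j are represented by
  vectors w1 i, w2 j via the inner product: omega_i(x) = w1 i \<bullet> x.\<close>

definition pr1 :: "real^('n1::finite + ('n2::finite + ('i::finite \<times> 'j::finite))) \<Rightarrow> real^'n1" where
  "pr1 z = (\<chi> a. z $ Inl a)"

definition pr2 :: "real^('n1::finite + ('n2::finite + ('i::finite \<times> 'j::finite))) \<Rightarrow> real^'n2" where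
  "pr2 z = (\<chi> b. z $ Inr (Inl b))"

definition gen_product ::
  "(real^'n1::finite \<Rightarrow> real^'n1 \<Rightarrow> real^'n1) \<Rightarrow> (real^'n2::finite \<Rightarrow> real^'n2 \<Rightarrow> real^'n2) \<Rightarrow>
   ('i::finite \<Rightarrow> real^'n1) \<Rightarrow> ('j::finite \<Rightarrow> real^'n2) \<Rightarrow>
   real^('n1 + ('n2 + ('i \<times> 'j))) \<Rightarrow> real^('n1 + ('n2 + ('i \<times> 'j))) \<Rightarrow> real^('n1 + ('n2 + ('i \<times> 'j)))"
where
  "gen_product br1 br2 w1 w2 z u = (\<chi> c. case c of
       Inl a \<Rightarrow> br1 (pr1 z) (pr1 u) $ a
     | Inr (Inl b) \<Rightarrow> br2 (pr2 z) (pr2 u) $ b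
     | Inr (Inr (i, j)) \<Rightarrow> (w1 i \<bullet> pr1 z) * (w2 j \<bullet> pr2 u) - (w1 i \<bullet> pr1 u) * (w2 j \<bullet> pr2 z))"

end

theory Submission
  imports Defs
begin

lemma sum_UNIV_Plus: "sum f (UNIV :: ('a::finite + 'b::finite) set) = sum (\<lambda>a. f (Inl a)) UNIV + sum (\<lambda>b. f (Inr b)) UNIV"
  using sum.Plus[of UNIV UNIV f] by (simp add: o_def)

lemma pr1_Inl[simp]: "pr1 (axis (Inl a) 1 :: real^('n1::finite + ('n2::finite + ('i::finite \<times> 'j::finite)))) = axis a 1"
  by (simp add: pr1_def axis_def vec_eq_iff)
lemma pr1_Inr[simp]: "pr1 (axis (Inr b) 1 :: real^('n1::finite + ('n2::finite + ('i::finite \<times> 'j::finite)))) = 0"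
  by (simp add: pr1_def axis_def vec_eq_iff)
lemma pr2_InrInl[simp]: "pr2 (axis (Inr (Inl a)) 1 :: real^('n1::finite + ('n2::finite + ('i::finite \<times> 'j::finite)))) = axis a 1"
  by (simp add: pr2_def axis_def vec_eq_iff)
lemma pr2_Inl[simp]: "pr2 (axis (Inl b) 1 :: real^('n1::finite + ('n2::finite + ('i::finite \<times> 'j::finite)))) = 0"
  by (simp add: pr2_def axis_def vec_eq_iff)
lemma pr2_InrInr[simp]: "pr2 (axis (Inr (Inr b)) 1 :: real^('n1::finite + ('n2::finite + ('i::finite \<times> 'j::finite)))) = 0"
  by (simp add: pr2_def axis_def vec_eq_iff)

lemma gp_Z_zero:
  assumes "bilinear br1" "bilinear br2"
  shows "gen_product br1 br2 w1 w2 (axis (Inr (Inr p)) 1) u = 0"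
  using assms by (auto simp: gen_product_def vec_eq_iff bilinear_lzero split: sum.splits prod.splits)

lemma max_rank_full:
  fixes br :: "real^'n \<Rightarrow> real^'n \<Rightarrow> real^'n"
  assumes "num_invariants br = 0"
  shows "\<exists>x. rank (coadj_matrix br x) = CARD('n)"
proof -
  have fin: "finite (range (\<lambda>x. rank (coadj_matrix br x)))"
    by (rule finite_subset[of _ "{..CARD('n)}"]) (auto intro: order_trans[OF rank_bound])
  have "Max (range (\<lambda>x. rank (coadj_matrix br x))) \<in> range (\<lambda>x. rank (coadj_matrix br x))"
    using fin by (intro Max_in) auto
  then obtain x where x: "Max (range (\<lambda>x. rank (coadj_matrix br x))) = rank (coadj_matrix br x)" by auto
  show ?thesis using assms x rank_bound[of "coadj_matrix br x"] unfolding num_invariants_def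
    by (intro exI[of _ x]) simp
qed


definition emb :: "real^'n1 \<Rightarrow> real^'n2 \<Rightarrow> real^('n1::finite + ('n2::finite + ('i::finite \<times> 'j::finite)))" where
  "emb x1 x2 = (\<chi> c. case c of Inl a \<Rightarrow> x1 $ a | Inr (Inl b) \<Rightarrow> x2 $ b | Inr (Inr p) \<Rightarrow> 0)"

lemma M_entries:
  assumes "bilinear br1" "bilinear br2"
  shows "coadj_matrix (gen_product br1 br2 w1 w2) (emb x1 x2) $ c $ d =
     (case c of Inl a \<Rightarrow> (case d of Inl a' \<Rightarrow> coadj_matrix br1 x1 $ a $ a' | _ \<Rightarrow> 0)
       | Inr (Inl b) \<Rightarrow> (case d of Inr (Inl b') \<Rightarrow> coadj_matrix br2 x2 $ b $ b' | _ \<Rightarrow> 0)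
       | Inr (Inr p) \<Rightarrow> 0)"
  using assms
  by (auto simp: coadj_matrix_def structure_const_def sum_UNIV_Plus emb_def gen_product_def
      bilinear_lzero bilinear_rzero split: sum.splits prod.splits)


lemma mvc: "((A::real^'m^'k) *v v) $ c = (\<Sum>d\<in>UNIV. A$c$d * v$d)"
  by (simp add: matrix_vector_mult_def)

lemma M_emb:
  assumes "bilinear br1" "bilinear br2"
  shows "coadj_matrix (gen_product br1 br2 w1 w2) (emb x1 x2) *v (emb v1 v2 :: real^('n1::finite + ('n2::finite + ('i::finite \<times> 'j::finite))))
     = emb (coadj_matrix br1 x1 *v v1) (coadj_matrix br2 x2 *v v2)"
proof (rule vec_eq_iff[THEN iffD2], rule allI)
  fix c :: "'n1 + ('n2 + ('i \<times> 'j))"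
  show "(coadj_matrix (gen_product br1 br2 w1 w2) (emb x1 x2) *v emb v1 v2) $ c = emb (coadj_matrix br1 x1 *v v1) (coadj_matrix br2 x2 *v v2) $ c"
  proof (cases c)
    case (Inl a) then show ?thesis by (simp only: Inl mvc M_entries[OF assms]; simp add: sum_UNIV_Plus emb_def mvc)
  next
    case (Inr r) then show ?thesis
    proof (cases r)
      case (Inl b) then show ?thesis using \<open>c = Inr r\<close> by (simp only: Inl Inr \<open>c = Inr r\<close> mvc M_entries[OF assms]; simp add: sum_UNIV_Plus emb_def mvc)
    next
      case (Inr p) then show ?thesis using \<open>c = Inr r\<close> by (simp only: Inr \<open>c = Inr r\<close> mvc M_entries[OF assms]; simp add: sum_UNIV_Plus emb_def mvc)
    qed
  qed
qed

lemma emb_axis1: "emb (axis a 1) 0 = (axis (Inl a) 1 :: real^('n1::finite + ('n2::finite + ('i::finite \<times> 'j::finite))))"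
  by (auto simp: emb_def axis_def vec_eq_iff split: sum.splits)
lemma emb_axis2: "emb 0 (axis b 1) = (axis (Inr (Inl b)) 1 :: real^('n1::finite + ('n2::finite + ('i::finite \<times> 'j::finite))))"
  by (auto simp: emb_def axis_def vec_eq_iff split: sum.splits)

lemma card_T: "card (range Inl \<union> range (\<lambda>b. Inr (Inl b)) :: ('n1::finite + ('n2::finite + ('i::finite \<times> 'j::finite))) set) = CARD('n1) + CARD('n2)"
  by (subst card_Un_disjoint) (auto simp: card_image inj_on_def)

lemma rank_upper:
  fixes w1 :: "'i::finite \<Rightarrow> real^'n1::finite" and w2 :: "'j::finite \<Rightarrow> real^'n2::finite"
  assumes "bilinear br1" "bilinear br2"
  shows "rank (coadj_matrix (gen_product br1 br2 w1 w2) x) \<le> CARD('n1::finite) + CARD('n2::finite)"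
proof -
  let ?T = "range Inl \<union> range (\<lambda>b. Inr (Inl b)) :: ('n1 + ('n2 + ('i \<times> 'j))) set"
  let ?M = "coadj_matrix (gen_product br1 br2 w1 w2) x"
  have z: "(?M *v v) $ c = 0" if nT: "c \<notin> ?T" for v c
  proof -
    obtain p where c: "c = Inr (Inr p)" using nT by (metis (no_types, lifting) UnI1 UnI2 rangeI sum.exhaust)
    show ?thesis
      by (simp add: c mvc coadj_matrix_def structure_const_def gp_Z_zero[OF assms])
  qed
  have sub: "range (\<lambda>v. ?M *v v) \<subseteq> {y. \<forall>c. c \<notin> ?T \<longrightarrow> y $ c = 0}"
    using z by blast
  have "rank ?M = dim (range (\<lambda>v. ?M *v v))" by (rule rank_dim_range)
  also have "\<dots> \<le> dim {y::real^('n1 + ('n2 + ('i \<times> 'j))). \<forall>c. c \<notin> ?T \<longrightarrow> y $ c = 0}"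
    by (rule dim_subset[OF sub])
  also have "\<dots> = card ?T" using dim_substandard_cart[where 'a=real, of ?T] by (simp add: dim_vec_eq)
  finally show ?thesis by (simp add: card_T)
qed


lemma card_sum_type: "CARD('a::finite + 'b::finite) = CARD('a) + CARD('b)"
  by (metis UNIV_Plus_UNIV card_Plus finite)

lemma card_prod_type: "CARD('a::finite \<times> 'b::finite) = CARD('a) * CARD('b)"
  by (simp add: card_cartesian_product UNIV_Times_UNIV[symmetric] del: UNIV_Times_UNIV)

theorem corollary1:
  fixes br1 :: "real^'n1 \<Rightarrow> real^'n1 \<Rightarrow> real^'n1"
    and br2 :: "real^'n2 \<Rightarrow> real^'n2 \<Rightarrow> real^'n2"
    and w1 :: "'i::finite \<Rightarrow> real^'n1"
    and w2 :: "'j::finite \<Rightarrow> real^'n2"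
  assumes "lie_algebra br1" and "lie_algebra br2"
    and "solvable_lie br1" and "solvable_lie br2"
    and "CARD('i) = betti1 br1" and "CARD('j) = betti1 br2"
    and "\<forall>i x y. w1 i \<bullet> br1 x y = 0" and "\<forall>j x y. w2 j \<bullet> br2 x y = 0"
    and "inj w1" and "independent (range w1)"
    and "inj w2" and "independent (range w2)"
    and "num_invariants br1 = 0" and "num_invariants br2 = 0"
  shows "num_invariants (gen_product br1 br2 w1 w2) = betti1 br1 * betti1 br2"
proof -
  have b1: "bilinear br1" and b2: "bilinear br2" using assms(1,2) by (auto simp: lie_algebra_def)
  obtain x1 where x1: "rank (coadj_matrix br1 x1) = CARD('n1)" using max_rank_full[OF assms(13)] by blast
  obtain x2 where x2: "rank (coadj_matrix br2 x2) = CARD('n2)" using max_rank_full[OF assms(14)] by blast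
  have s1: "surj ((*v) (coadj_matrix br1 x1))" using x1 full_rank_surjective by blast
  have s2: "surj ((*v) (coadj_matrix br2 x2))" using x2 full_rank_surjective by blast
  let ?G = "gen_product br1 br2 w1 w2"
  let ?T = "range Inl \<union> range (\<lambda>b. Inr (Inl b)) :: ('n1 + ('n2 + ('i \<times> 'j))) set"
  let ?M = "coadj_matrix ?G (emb x1 x2 :: real^('n1 + ('n2 + ('i \<times> 'j))))"
  have inr: "(\<lambda>c. axis c 1) ` ?T \<subseteq> range (\<lambda>v. ?M *v v)"
  proof clarify
    fix c assume "c \<in> ?T"
    then consider a where "c = Inl a" | b where "c = Inr (Inl b)" by blast
    then show "axis c 1 \<in> range (\<lambda>v. ?M *v v)"
    proof cases
      case 1
      obtain v1 where "coadj_matrix br1 x1 *v v1 = axis a 1" using s1 by (metis surjD)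
      then have "?M *v emb v1 0 = axis c 1"
        using 1 by (simp add: M_emb[OF b1 b2] emb_axis1)
      then show ?thesis by (metis rangeI)
    next
      case 2
      obtain v2 where "coadj_matrix br2 x2 *v v2 = axis b 1" using s2 by (metis surjD)
      then have "?M *v emb 0 v2 = axis c 1"
        using 2 by (simp add: M_emb[OF b1 b2] emb_axis2)
      then show ?thesis by (metis rangeI)
    qed
  qed
  have indep: "independent ((\<lambda>c. axis c 1) ` ?T :: (real^('n1 + ('n2 + ('i \<times> 'j)))) set)"
    by (rule independent_mono[OF independent_Basis]) auto
  have cardimg: "card ((\<lambda>c. axis c 1) ` ?T :: (real^('n1 + ('n2 + ('i \<times> 'j)))) set) = card ?T"
    by (rule card_image) (auto simp: inj_on_def axis_eq_axis)
  have "CARD('n1) + CARD('n2) = dim ((\<lambda>c. axis c 1) ` ?T :: (real^('n1 + ('n2 + ('i \<times> 'j)))) set)"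
    using dim_eq_card_independent[OF indep] cardimg by (simp add: card_T)
  also have "\<dots> \<le> dim (range (\<lambda>v. ?M *v v))" by (rule dim_subset[OF inr])
  also have "\<dots> = rank ?M" by (rule rank_dim_range[symmetric])
  finally have low: "CARD('n1) + CARD('n2) \<le> rank ?M" .
  let ?R = "range (\<lambda>x. rank (coadj_matrix ?G x))"
  have upall: "\<forall>r\<in>?R. r \<le> CARD('n1) + CARD('n2)" using rank_upper[OF b1 b2] by auto
  have fin: "finite ?R" by (rule finite_subset[of _ "{..CARD('n1) + CARD('n2)}"]) (use upall in auto)
  have "Max ?R = CARD('n1) + CARD('n2)"
  proof (rule antisym)
    show "Max ?R \<le> CARD('n1) + CARD('n2)" using fin upall by (subst Max_le_iff) auto
    show "CARD('n1) + CARD('n2) \<le> Max ?R" using low fin by (meson Max_ge order_trans rangeI)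
  qed
  then show ?thesis
    unfolding num_invariants_def using assms(5,6) by (simp add: card_sum_type card_prod_type)
qed

end
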